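(* Let $C_1,C_2$ be Archimedean $d$-copulas with strict generators $\phi_1,\phi_2$, respectively. If there exists $\varepsilon>0$ such that $\phi_1/\phi_2$ is increasing on $(0,\varepsilon)$, then $\phi_1\circ\phi_2^{-1}:[0,\infty)\to[0,\infty)$ is subadditive near $\infty$.
   Context: A generator is a continuous, strictly decreasing function $\phi:[0,1]\to[0,\infty]$ with $\phi(1)=0$; it is strict if $\lim_{s\searrow0}\phi(s)=\infty$, in which case $\phi$ is a bijection $(0,1]\to[0,\infty)$ with inverse $\phi^{-1}$. A $d$-copula $C$ is Archimedean with strict generator $\phi$ if $C(\boldsymbol u)=\phi^{-1}(\sum_{k=1}^d\phi(u_k))$. A function $f:[0,\infty)\to[0,\infty)$ is subadditive near $\infty$ if there is $M\ge0$ with $f(x+y)\le f(x)+f(y)$ for all $x,y\in[M,\infty)$. *)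

theory Defs
  imports "HOL-Analysis.Analysis" "HOL-Library.Extended_Real"
begin

definition generator :: "(real \<Rightarrow> ereal) \<Rightarrow> bool" where
  "generator \<phi> \<longleftrightarrow>
     continuous_on {0..1} \<phi> \<and>
     (\<forall>x y. 0 \<le> x \<longrightarrow> x < y \<longrightarrow> y \<le> 1 \<longrightarrow> \<phi> y < \<phi> x) \<and>
     (\<forall>x\<in>{0..1}. 0 \<le> \<phi> x) \<and>
     \<phi> 1 = 0"

definition strict_generator :: "(real \<Rightarrow> ereal) \<Rightarrow> bool" where
  "strict_generator \<phi> \<longleftrightarrow> generator \<phi> \<and> (\<phi> \<longlongrightarrow> \<infinity>) (at_right 0)"

definition gen_inv :: "(real \<Rightarrow> ereal) \<Rightarrow> ereal \<Rightarrow> real" where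
  "gen_inv \<phi> t = (THE s. s \<in> {0..1} \<and> \<phi> s = t)"

text \<open>d-copulas; points of [0,1]^d are functions nat \<Rightarrow> real, only the
  coordinates k < d being relevant.\<close>
definition in_unit_cube :: "nat \<Rightarrow> (nat \<Rightarrow> real) \<Rightarrow> bool" where
  "in_unit_cube d u \<longleftrightarrow> (\<forall>k<d. 0 \<le> u k \<and> u k \<le> 1)"

definition is_copula :: "nat \<Rightarrow> ((nat \<Rightarrow> real) \<Rightarrow> real) \<Rightarrow> bool" where
  "is_copula d C \<longleftrightarrow>
     (\<forall>u. in_unit_cube d u \<longrightarrow> 0 \<le> C u \<and> C u \<le> 1) \<and>
     (\<forall>u. in_unit_cube d u \<longrightarrow> (\<exists>k<d. u k = 0) \<longrightarrow> C u = 0) \<and>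
     (\<forall>u k. in_unit_cube d u \<longrightarrow> k < d \<longrightarrow> (\<forall>j<d. j \<noteq> k \<longrightarrow> u j = 1) \<longrightarrow> C u = u k) \<and>
     (\<forall>a b. in_unit_cube d a \<longrightarrow> in_unit_cube d b \<longrightarrow> (\<forall>k<d. a k \<le> b k) \<longrightarrow>
        0 \<le> (\<Sum>S\<in>Pow {..<d}. (-1) ^ card S * C (\<lambda>k. if k \<in> S then a k else b k)))"

definition archimedean_copula ::
  "nat \<Rightarrow> ((nat \<Rightarrow> real) \<Rightarrow> real) \<Rightarrow> (real \<Rightarrow> ereal) \<Rightarrow> bool" where
  "archimedean_copula d C \<phi> \<longleftrightarrow>
     is_copula d C \<and> strict_generator \<phi> \<and>
     (\<forall>u. in_unit_cube d u \<longrightarrow> C u = gen_inv \<phi> (\<Sum>k<d. \<phi> (u k)))"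

definition subadditive_near_infinity :: "(real \<Rightarrow> real) \<Rightarrow> bool" where
  "subadditive_near_infinity f \<longleftrightarrow>
     (\<exists>M\<ge>0. \<forall>x y. M \<le> x \<longrightarrow> M \<le> y \<longrightarrow> f (x + y) \<le> f x + f y)"

end

theory Submission
  imports Defs
begin

lemma gen_exists:
  assumes sg: "strict_generator \<phi>" and x: "0 \<le> x"
  shows "\<exists>s. 0 < s \<and> s \<le> 1 \<and> \<phi> s = ereal x"
proof -
  have g: "generator \<phi>" and lim: "(\<phi> \<longlongrightarrow> \<infinity>) (at_right 0)"
    using sg unfolding strict_generator_def by auto
  have "eventually (\<lambda>t. ereal x < \<phi> t) (at_right (0::real))"
    using order_tendstoD(1)[OF lim, of "ereal x"] by simp
  then obtain b where b: "b > 0" "\<And>t. 0 < t \<Longrightarrow> t < b \<Longrightarrow> ereal x < \<phi> t"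
    unfolding eventually_at_right_field by auto
  define a where "a = min (b/2) (1/2)"
  have a: "0 < a" "a < b" "a \<le> 1" using b(1) unfolding a_def by auto
  have phia: "ereal x < \<phi> a" using b(2) a by auto
  have cont: "continuous_on {a..1} \<phi>"
    using g a unfolding generator_def by (auto intro: continuous_on_subset)
  have conn: "connected (\<phi> ` {a..1})"
    by (rule connected_continuous_image[OF cont]) simp
  have "\<phi> 1 = 0" using g unfolding generator_def by auto
  have "ereal x \<in> \<phi> ` {a..1}"
    apply (rule connectedD_interval[OF conn, of "\<phi> 1" "\<phi> a"])
    using a phia \<open>\<phi> 1 = 0\<close> x by auto
  then obtain s where "s \<in> {a..1}" "\<phi> s = ereal x" by auto
  then show ?thesis using a by (intro exI[of _ s]) auto
qed

lemma gen_inv_eq: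
  assumes g: "generator \<phi>" and s: "0 \<le> s" "s \<le> 1" "\<phi> s = t"
  shows "gen_inv \<phi> t = s"
  unfolding gen_inv_def
proof (rule the_equality)
  show "s \<in> {0..1} \<and> \<phi> s = t" using s by auto
  fix r assume r: "r \<in> {0..1} \<and> \<phi> r = t"
  have mono: "\<And>x y. 0 \<le> x \<Longrightarrow> x < y \<Longrightarrow> y \<le> 1 \<Longrightarrow> \<phi> y < \<phi> x"
    using g unfolding generator_def by auto
  show "r = s"
  proof (rule ccontr)
    assume "r \<noteq> s"
    then have "r < s \<or> s < r" by auto
    then show False using mono[of r s] mono[of s r] r s by auto
  qed
qed

theorem mainTheorem13:
  fixes d :: nat and C1 C2 :: "(nat \<Rightarrow> real) \<Rightarrow> real"
    and \<phi>1 \<phi>2 :: "real \<Rightarrow> ereal"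
  assumes "d \<ge> 2"
    and "archimedean_copula d C1 \<phi>1"
    and "archimedean_copula d C2 \<phi>2"
    and "\<exists>\<epsilon>>0. \<forall>s t. 0 < s \<longrightarrow> s \<le> t \<longrightarrow> t < \<epsilon> \<longrightarrow> t < 1 \<longrightarrow>
           real_of_ereal (\<phi>1 s) / real_of_ereal (\<phi>2 s)
             \<le> real_of_ereal (\<phi>1 t) / real_of_ereal (\<phi>2 t)"
  shows "subadditive_near_infinity (\<lambda>x. real_of_ereal (\<phi>1 (gen_inv \<phi>2 (ereal x))))"
proof -
  obtain \<epsilon> where e: "\<epsilon> > 0" and inc: "\<And>s t. 0 < s \<Longrightarrow> s \<le> t \<Longrightarrow> t < \<epsilon> \<Longrightarrow> t < 1 \<Longrightarrow>
           real_of_ereal (\<phi>1 s) / real_of_ereal (\<phi>2 s)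
             \<le> real_of_ereal (\<phi>1 t) / real_of_ereal (\<phi>2 t)"
    using assms(4) by blast
  have sg: "strict_generator \<phi>2" using assms(3) unfolding archimedean_copula_def by auto
  then have g: "generator \<phi>2" unfolding strict_generator_def by auto
  have mono: "\<And>x y. 0 \<le> x \<Longrightarrow> x < y \<Longrightarrow> y \<le> 1 \<Longrightarrow> \<phi>2 y < \<phi>2 x"
    using g unfolding generator_def by auto
  have nn: "\<And>x. 0 \<le> x \<Longrightarrow> x \<le> 1 \<Longrightarrow> 0 \<le> \<phi>2 x"
    using g unfolding generator_def by auto
  have one: "\<phi>2 1 = 0" using g unfolding generator_def by auto
  define \<delta> where "\<delta> = min \<epsilon> 1 / 2"
  have dl: "0 < \<delta>" "\<delta> < \<epsilon>" "\<delta> < 1" using e unfolding \<delta>_def by auto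
  have fin: "\<bar>\<phi>2 \<delta>\<bar> \<noteq> \<infinity>"
    using mono[of "\<delta>/2" \<delta>] nn[of \<delta>] dl by auto
  define M where "M = real_of_ereal (\<phi>2 \<delta>)"
  have phM: "\<phi>2 \<delta> = ereal M" using fin unfolding M_def by (cases "\<phi>2 \<delta>") auto
  have Mpos: "M > 0" using mono[of \<delta> 1] dl one phM by auto
  define f where "f = (\<lambda>x. real_of_ereal (\<phi>1 (gen_inv \<phi>2 (ereal x))))"
  define G where "G = (\<lambda>x. f x / x)"
  have inv: "0 < gen_inv \<phi>2 (ereal x) \<and> gen_inv \<phi>2 (ereal x) \<le> \<delta> \<and>
              \<phi>2 (gen_inv \<phi>2 (ereal x)) = ereal x" if xM: "M \<le> x" for x
  proof -
    obtain s where s: "0 < s" "s \<le> 1" "\<phi>2 s = ereal x"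
      using gen_exists[OF sg, of x] xM Mpos by auto
    have si: "gen_inv \<phi>2 (ereal x) = s" using gen_inv_eq[OF g] s by auto
    have "s \<le> \<delta>"
    proof (rule ccontr)
      assume "\<not> s \<le> \<delta>"
      then have "\<phi>2 s < \<phi>2 \<delta>" using mono[of \<delta> s] dl s by auto
      then show False using s phM xM by auto
    qed
    then show ?thesis using s si by auto
  qed
  have Geq: "G x = real_of_ereal (\<phi>1 (gen_inv \<phi>2 (ereal x))) / real_of_ereal (\<phi>2 (gen_inv \<phi>2 (ereal x)))"
    if "M \<le> x" for x
    using inv[OF that] unfolding G_def f_def by simp
  have Gmono: "G y \<le> G x" if "M \<le> x" "x \<le> y" for x y
  proof -
    have ix: "0 < gen_inv \<phi>2 (ereal x) \<and> gen_inv \<phi>2 (ereal x) \<le> \<delta> \<and>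
              \<phi>2 (gen_inv \<phi>2 (ereal x)) = ereal x" using inv that by auto
    have iy: "0 < gen_inv \<phi>2 (ereal y) \<and> gen_inv \<phi>2 (ereal y) \<le> \<delta> \<and>
              \<phi>2 (gen_inv \<phi>2 (ereal y)) = ereal y" using inv that by auto
    have le: "gen_inv \<phi>2 (ereal y) \<le> gen_inv \<phi>2 (ereal x)"
    proof (rule ccontr)
      assume "\<not> ?thesis"
      then have "\<phi>2 (gen_inv \<phi>2 (ereal y)) < \<phi>2 (gen_inv \<phi>2 (ereal x))"
        using mono[of "gen_inv \<phi>2 (ereal x)" "gen_inv \<phi>2 (ereal y)"] ix iy dl by auto
      then show False using ix iy that by auto
    qed
    show ?thesis
      unfolding Geq[OF that(1)] Geq[of y, OF order_trans[OF that]]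
      using inc[OF _ le] ix iy dl by auto
  qed
  have fx: "f x = x * G x" if "M \<le> x" for x
    using that Mpos unfolding G_def by auto
  show ?thesis
    unfolding subadditive_near_infinity_def f_def[symmetric]
  proof (intro exI[of _ M] conjI allI impI)
    show "0 \<le> M" using Mpos by simp
    fix x y assume xy: "M \<le> x" "M \<le> y"
    have "f (x + y) = x * G (x + y) + y * G (x + y)"
      using fx[of "x+y"] xy Mpos by (simp add: algebra_simps)
    also have "\<dots> \<le> x * G x + y * G y"
      using Gmono[of x "x+y"] Gmono[of y "x+y"] xy Mpos
      by (intro add_mono mult_left_mono) auto
    also have "\<dots> = f x + f y" using fx xy by simp
    finally show "f (x + y) \<le> f x + f y" .
  qed
qed

end
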